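(* With the notation of the context, for every $\rho\in S$ the set $U(\rho)$ is nonempty and not meager with respect to the topology $\tau$; in particular $\langle H,\tau\rangle$ is a Baire space.
   Context: Work in $2^\omega$ with coordinatewise addition mod 2 (also used for finite 0-1 sequences of equal domain). Fix integers $0=n_0<n_1<n_2<\cdots$ and sets $C_i\subseteq 2^{[n_i,n_{i+1})}$ such that for every $i$ and all $s_0,\ldots,s_{n_i}\in 2^{[n_i,n_{i+1})}$ both $\bigcap_{k\le n_i}(C_i+s_k)$ and $\bigcap_{k\le n_i}((2^{[n_i,n_{i+1})}\setminus C_i)+s_k)$ are nonempty. Let $H=\{x\in 2^\omega: x\restriction[n_i,n_{i+1})\in C_i \text{ for all } i\}$. Fix a sequence $\langle P_m:m\in\omega\rangle$ of nonempty perfect subsets of $2^\omega$; let $P_m^*=\{x+y:x,y\in P_m\}$ and $T_m^*=\{x\restriction k: x\in P_m^*, k\in\omega\}$. A tree mapping with domain $n\ge1$ is a partial function $\pi$ from $\{(k,\ell):k<\ell<n\}$ to $\omega$ such that for every $0<\ell<n$ there is exactly one $k<\ell$ with $\pi(k,\ell)$ defined. A finite sequence $s$ is acceptable if ${\rm dom}(s)=n_i$ for some $i$ and $s\restriction[n_j,n_{j+1})\in C_j$ for all $j<i$. $S$ is the set of all $\rho=\langle\pi,s_0,\ldots,s_{n-1}\rangle$ where $n=n(\rho)\ge1$, $\pi$ is a tree mapping with domain $n$, the $s_j$ are acceptable with a common domain $n_i$ with $n_i\ge n$ (put $i(\rho)=i$), and $s_k+s_\ell\in T^*_{\pi(k,\ell)}$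 whenever $\pi(k,\ell)$ is defined. For $\rho=\langle\pi,s_0,\ldots,s_{n-1}\rangle\in S$, $U(\rho)$ is the set of $x_0\in H$ for which there are $x_1,\ldots,x_{n-1}\in H$ with each $s_j$ an initial segment of $x_j$ and $\langle\pi,x_0\restriction n_j,\ldots,x_{n-1}\restriction n_j\rangle\in S$ for all $j>i(\rho)$. The sets $U(\rho)$, $\rho\in S$, form a basis of a topology $\tau$ on $H$. *)

theory Defs
  imports "HOL-Analysis.Analysis"
begin

text \<open>Elements of the Cantor space are functions nat => bool.  A finite 0-1 sequence with
domain A (a subset of nat) is represented by a function nat => bool that is False outside A.\<close>

definition cadd :: "(nat \<Rightarrow> bool) \<Rightarrow> (nat \<Rightarrow> bool) \<Rightarrow> (nat \<Rightarrow> bool)" where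
  "cadd x y = (\<lambda>k. x k \<noteq> y k)"

definition seqs :: "nat set \<Rightarrow> (nat \<Rightarrow> bool) set" where
  "seqs A = {s. \<forall>k. k \<notin> A \<longrightarrow> s k = False}"

definition restr :: "(nat \<Rightarrow> bool) \<Rightarrow> nat set \<Rightarrow> (nat \<Rightarrow> bool)" where
  "restr x A = (\<lambda>k. if k \<in> A then x k else False)"

definition setadd :: "(nat \<Rightarrow> bool) set \<Rightarrow> (nat \<Rightarrow> bool) \<Rightarrow> (nat \<Rightarrow> bool) set" where
  "setadd C s = (\<lambda>c. cadd c s) ` C"

definition cantor_top :: "(nat \<Rightarrow> bool) topology" where
  "cantor_top = product_topology (\<lambda>_. discrete_topology (UNIV :: bool set)) UNIV"

definition perfect_set :: "(nat \<Rightarrow> bool) set \<Rightarrow> bool" where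
  "perfect_set P \<longleftrightarrow> cantor_top derived_set_of P = P"

definition Hset :: "(nat \<Rightarrow> nat) \<Rightarrow> (nat \<Rightarrow> (nat \<Rightarrow> bool) set) \<Rightarrow> (nat \<Rightarrow> bool) set" where
  "Hset N C = {x. \<forall>i. restr x {N i..<N (Suc i)} \<in> C i}"

definition Pstar :: "(nat \<Rightarrow> bool) set \<Rightarrow> (nat \<Rightarrow> bool) set" where
  "Pstar P = {cadd x y | x y. x \<in> P \<and> y \<in> P}"

definition in_Tstar :: "(nat \<Rightarrow> bool) set \<Rightarrow> nat \<Rightarrow> (nat \<Rightarrow> bool) \<Rightarrow> bool" where
  "in_Tstar P d s \<longleftrightarrow> (\<exists>x \<in> Pstar P. s = restr x {..<d})"

definition tree_mapping :: "(nat \<times> nat \<Rightarrow> nat option) \<Rightarrow> nat \<Rightarrow> bool" where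
  "tree_mapping \<pi> n \<longleftrightarrow> n \<ge> 1 \<and>
     (\<forall>k l. \<pi> (k, l) \<noteq> None \<longrightarrow> k < l \<and> l < n) \<and>
     (\<forall>l. 0 < l \<and> l < n \<longrightarrow> (\<exists>!k. k < l \<and> \<pi> (k, l) \<noteq> None))"

definition acceptable :: "(nat \<Rightarrow> nat) \<Rightarrow> (nat \<Rightarrow> (nat \<Rightarrow> bool) set) \<Rightarrow> nat \<Rightarrow> (nat \<Rightarrow> bool) \<Rightarrow> bool" where
  "acceptable N C i s \<longleftrightarrow> s \<in> seqs {..<N i} \<and> (\<forall>j<i. restr s {N j..<N (Suc j)} \<in> C j)"

text \<open>A condition rho = <pi, s_0, ..., s_(n-1)> is represented as (pi, i, [s_0,...,s_(n-1)])
where n_i is the common domain of the s_j (i is uniquely determined since N is strictly increasing).\<close>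
definition Sset :: "(nat \<Rightarrow> nat) \<Rightarrow> (nat \<Rightarrow> (nat \<Rightarrow> bool) set) \<Rightarrow> (nat \<Rightarrow> (nat \<Rightarrow> bool) set)
    \<Rightarrow> ((nat \<times> nat \<Rightarrow> nat option) \<times> nat \<times> (nat \<Rightarrow> bool) list) set" where
  "Sset N C P = {(\<pi>, i, ss). tree_mapping \<pi> (length ss) \<and> N i \<ge> length ss \<and>
      (\<forall>j < length ss. acceptable N C i (ss ! j)) \<and>
      (\<forall>k l m. \<pi> (k, l) = Some m \<longrightarrow> in_Tstar (P m) (N i) (cadd (ss ! k) (ss ! l)))}"

definition Uset :: "(nat \<Rightarrow> nat) \<Rightarrow> (nat \<Rightarrow> (nat \<Rightarrow> bool) set) \<Rightarrow> (nat \<Rightarrow> (nat \<Rightarrow> bool) set)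
    \<Rightarrow> (nat \<times> nat \<Rightarrow> nat option) \<times> nat \<times> (nat \<Rightarrow> bool) list \<Rightarrow> (nat \<Rightarrow> bool) set" where
  "Uset N C P \<rho> = (case \<rho> of (\<pi>, i, ss) \<Rightarrow>
     {x0 \<in> Hset N C. \<exists>x :: nat \<Rightarrow> nat \<Rightarrow> bool. x 0 = x0 \<and>
        (\<forall>j < length ss. x j \<in> Hset N C \<and> restr (x j) {..<N i} = ss ! j) \<and>
        (\<forall>j > i. (\<pi>, j, map (\<lambda>k. restr (x k) {..<N j}) [0..<length ss]) \<in> Sset N C P)})"

definition tau :: "(nat \<Rightarrow> nat) \<Rightarrow> (nat \<Rightarrow> (nat \<Rightarrow> bool) set) \<Rightarrow> (nat \<Rightarrow> (nat \<Rightarrow> bool) set)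
    \<Rightarrow> (nat \<Rightarrow> bool) topology" where
  "tau N C P = topology_generated_by (Uset N C P ` Sset N C P)"

definition nowhere_dense_in :: "'a topology \<Rightarrow> 'a set \<Rightarrow> bool" where
  "nowhere_dense_in X A \<longleftrightarrow> A \<subseteq> topspace X \<and> X interior_of (X closure_of A) = {}"

definition meager_in :: "'a topology \<Rightarrow> 'a set \<Rightarrow> bool" where
  "meager_in X A \<longleftrightarrow> (\<exists>F. countable F \<and> (\<forall>B \<in> F. nowhere_dense_in X B) \<and> A = \<Union>F)"

definition Baire_space_top :: "'a topology \<Rightarrow> bool" where
  "Baire_space_top X \<longleftrightarrow> (\<forall>U. openin X U \<and> U \<noteq> {} \<longrightarrow> \<not> meager_in X U)"

end

theory Submission imports Defs begin

lemma cadd_restr: "cadd (restr a A) (restr b A) = restr (cadd a b) A"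
  by (auto simp: cadd_def restr_def fun_eq_iff)

lemma restr_restr: "restr (restr x A) B = restr x (A \<inter> B)"
  by (auto simp: restr_def fun_eq_iff)

lemma restr_in_seqs: "restr x A \<in> seqs A"
  by (auto simp: restr_def seqs_def)

lemma seqs_restr: "s \<in> seqs A \<Longrightarrow> restr s A = s"
  by (auto simp: restr_def seqs_def fun_eq_iff)

lemma restr_lt_lt: "a \<le> b \<Longrightarrow> restr (restr x {..<b}) {..<a} = restr x {..<a}"
  by (auto simp: restr_def fun_eq_iff)

locale ctx =
  fixes N :: "nat \<Rightarrow> nat"
    and C :: "nat \<Rightarrow> (nat \<Rightarrow> bool) set"
    and P :: "nat \<Rightarrow> (nat \<Rightarrow> bool) set"
  assumes N0: "N 0 = 0"
    and Nmono: "strict_mono N"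
    and Csub: "\<And>i. C i \<subseteq> seqs {N i..<N (Suc i)}"
    and Cint: "\<And>i s. (\<forall>k \<le> N i. s k \<in> seqs {N i..<N (Suc i)}) \<Longrightarrow>
                 (\<Inter>k \<in> {..N i}. setadd (C i) (s k)) \<noteq> {}"
begin

abbreviation "S \<equiv> Sset N C P"
abbreviation "U \<equiv> Uset N C P"
abbreviation "H \<equiv> Hset N C"

lemma Nle: "i \<le> j \<Longrightarrow> N i \<le> N j"
  using Nmono by (simp add: strict_mono_less_eq)

lemma Nlt: "i < j \<Longrightarrow> N i < N j"
  using Nmono by (simp add: strict_mono_less)

lemma Nge: "i \<le> N i"
  using Nmono by (simp add: strict_mono_imp_increasing)

lemma Sset_relabel:
  assumes A: "(\<pi>', j', ss') \<in> S" and tm: "tree_mapping \<pi> n"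
    and g: "\<forall>k<n. g k < length ss'"
    and pp: "\<forall>k l m. \<pi> (k,l) = Some m \<longrightarrow> \<pi>' (g k, g l) = Some m"
    and jj: "j \<le> j'" and nj: "n \<le> N j"
  shows "(\<pi>, j, map (\<lambda>k. restr (ss' ! g k) {..<N j}) [0..<n]) \<in> S"
proof -
  have acc: "\<forall>k < length ss'. acceptable N C j' (ss' ! k)"
    and ts: "\<forall>k l m. \<pi>' (k, l) = Some m \<longrightarrow> in_Tstar (P m) (N j') (cadd (ss' ! k) (ss' ! l))"
    using A by (auto simp: Sset_def)
  have NN: "N j \<le> N j'" using jj Nle by auto
  have "acceptable N C j (restr (ss' ! g k) {..<N j})" if k: "k < n" for k
  proof -
    have a: "acceptable N C j' (ss' ! g k)" using acc g k by auto
    show ?thesis unfolding acceptable_def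
    proof (intro conjI allI impI)
      show "restr (ss' ! g k) {..<N j} \<in> seqs {..<N j}" by (rule restr_in_seqs)
      fix j0 assume j0: "j0 < j"
      have "N (Suc j0) \<le> N j" using j0 Nle by auto
      then have "{..<N j} \<inter> {N j0..<N (Suc j0)} = {N j0..<N (Suc j0)}" by auto
      then have "restr (restr (ss' ! g k) {..<N j}) {N j0..<N (Suc j0)} = restr (ss' ! g k) {N j0..<N (Suc j0)}"
        by (simp add: restr_restr)
      also have "\<dots> \<in> C j0" using a j0 jj unfolding acceptable_def by auto
      finally show "restr (restr (ss' ! g k) {..<N j}) {N j0..<N (Suc j0)} \<in> C j0" .
    qed
  qed
  moreover have "in_Tstar (P m) (N j) (cadd (restr (ss' ! g k) {..<N j}) (restr (ss' ! g l) {..<N j}))"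
    if pm: "\<pi> (k, l) = Some m" for k l m
  proof -
    have "in_Tstar (P m) (N j') (cadd (ss' ! g k) (ss' ! g l))" using pp ts pm by auto
    then obtain x where x: "x \<in> Pstar (P m)" "cadd (ss' ! g k) (ss' ! g l) = restr x {..<N j'}"
      unfolding in_Tstar_def by auto
    have "cadd (restr (ss' ! g k) {..<N j}) (restr (ss' ! g l) {..<N j}) = restr x {..<N j}"
      by (simp add: cadd_restr x(2) restr_lt_lt NN)
    then show ?thesis using x(1) unfolding in_Tstar_def by auto
  qed
  moreover have "\<And>k l. \<pi> (k,l) \<noteq> None \<Longrightarrow> k < l \<and> l < n" using tm unfolding tree_mapping_def by auto
  ultimately have A1: "\<forall>k<n. acceptable N C j (restr (ss' ! g k) {..<N j})"
    and A2: "\<forall>k l m. \<pi> (k,l) = Some m \<longrightarrow> in_Tstar (P m) (N j) (cadd (restr (ss' ! g k) {..<N j}) (restr (ss' ! g l) {..<N j}))"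
    and A3: "\<forall>k l. \<pi> (k,l) \<noteq> None \<longrightarrow> k < l \<and> l < n" by blast+
  have A2': "in_Tstar (P m) (N j) (cadd (map (\<lambda>k. restr (ss' ! g k) {..<N j}) [0..<n] ! k) (map (\<lambda>k. restr (ss' ! g k) {..<N j}) [0..<n] ! l))"
    if "\<pi> (k,l) = Some m" for k l m
  proof -
    have "k < l" "l < n" using A3 that by auto
    then show ?thesis using A2 that by simp
  qed
  show ?thesis unfolding Sset_def using tm nj A1 A2' by simp
qed

lemma one_step:
  assumes A: "(\<pi>, i, ss) \<in> S"
  shows "\<exists>ss'. (\<pi>, Suc i, ss') \<in> S \<and> length ss' = length ss \<and> (\<forall>k<length ss. restr (ss' ! k) {..<N i} = ss ! k)"
proof -
  define n where "n = length ss"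
  have tm: "tree_mapping \<pi> n" and nle: "n \<le> N i" and acc: "\<forall>j<n. acceptable N C i (ss ! j)"
    and tst: "\<forall>k l m. \<pi> (k,l) = Some m \<longrightarrow> in_Tstar (P m) (N i) (cadd (ss ! k) (ss ! l))"
    using A by (auto simp: Sset_def n_def)
  define B where "B = {N i..<N (Suc i)}"
  have NiS: "N i < N (Suc i)" using Nlt by auto
  have "\<forall>l. \<exists>k m y. 0 < l \<and> l < n \<longrightarrow> (k < l \<and> \<pi> (k,l) = Some m \<and> y \<in> Pstar (P m) \<and> cadd (ss ! k) (ss ! l) = restr y {..<N i})"
  proof
    fix l
    show "\<exists>k m y. 0 < l \<and> l < n \<longrightarrow> (k < l \<and> \<pi> (k,l) = Some m \<and> y \<in> Pstar (P m) \<and> cadd (ss ! k) (ss ! l) = restr y {..<N i})"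
    proof (cases "0 < l \<and> l < n")
      case True
      then obtain k where k: "k < l" "\<pi> (k,l) \<noteq> None" using tm unfolding tree_mapping_def by blast
      then obtain m where m: "\<pi> (k,l) = Some m" by auto
      then obtain y where "y \<in> Pstar (P m)" "cadd (ss ! k) (ss ! l) = restr y {..<N i}"
        using tst unfolding in_Tstar_def by blast
      then show ?thesis using k m by blast
    qed auto
  qed
  then obtain par mm y where pmy: "\<And>l. 0 < l \<Longrightarrow> l < n \<Longrightarrow> par l < l \<and> \<pi> (par l, l) = Some (mm l) \<and> y l \<in> Pstar (P (mm l)) \<and> cadd (ss ! par l) (ss ! l) = restr (y l) {..<N i}"
    by metis
  define w where "w l = restr (y l) B" for l
  have wB: "w l \<in> seqs B" for l unfolding w_def by (rule restr_in_seqs)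
  have caddB: "a \<in> seqs B \<Longrightarrow> b \<in> seqs B \<Longrightarrow> cadd a b \<in> seqs B" for a b
    by (auto simp: seqs_def cadd_def)
  have tex: "n' \<le> n \<Longrightarrow> \<exists>t. (\<forall>k. t k \<in> seqs B) \<and> (\<forall>l. 0 < l \<and> l < n' \<longrightarrow> cadd (t (par l)) (t l) = w l)" for n'
  proof (induction n')
    case 0
    show ?case by (rule exI[of _ "\<lambda>_ _. False"]) (auto simp: seqs_def)
  next
    case (Suc n')
    then obtain t where t: "\<forall>k. t k \<in> seqs B" "\<forall>l. 0 < l \<and> l < n' \<longrightarrow> cadd (t (par l)) (t l) = w l" by auto
    define t' where "t' = t(n' := cadd (t (par n')) (w n'))"
    have "\<forall>k. t' k \<in> seqs B" using t(1) wB caddB by (simp add: t'_def)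
    moreover have "cadd (t' (par l)) (t' l) = w l" if l: "0 < l" "l < Suc n'" for l
    proof (cases "l < n'")
      case True
      then have "par l < n'" using pmy[of l] l Suc.prems by auto
      then show ?thesis using t(2) l True by (simp add: t'_def)
    next
      case False
      then have ln: "l = n'" using l by auto
      then have "par l < n'" using pmy[of l] l Suc.prems by auto
      then show ?thesis using ln by (auto simp: t'_def cadd_def fun_eq_iff)
    qed
    ultimately show ?case by blast
  qed
  obtain t where t: "\<forall>k. t k \<in> seqs B" "\<forall>l. 0 < l \<and> l < n \<longrightarrow> cadd (t (par l)) (t l) = w l"
    using tex[of n] by auto
  define s where "s k = (if k < n then t k else (\<lambda>_. False))" for k
  have "\<forall>k \<le> N i. s k \<in> seqs B" using t(1) by (auto simp: s_def seqs_def)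
  then have "(\<Inter>k \<in> {..N i}. setadd (C i) (s k)) \<noteq> {}" using Cint[of i s] unfolding B_def by blast
  then obtain c where c: "\<And>k. k \<le> N i \<Longrightarrow> c \<in> setadd (C i) (s k)" by blast
  define u where "u k = cadd c (t k)" for k
  have uC: "u k \<in> C i" if "k < n" for k
  proof -
    have "c \<in> setadd (C i) (t k)" using c[of k] that nle by (auto simp: s_def)
    then obtain c' where "c' \<in> C i" "c = cadd c' (t k)" unfolding setadd_def by auto
    moreover have "cadd (cadd c' (t k)) (t k) = c'" by (auto simp: cadd_def fun_eq_iff)
    ultimately show ?thesis by (simp add: u_def)
  qed
  have uB: "u k \<in> seqs B" if "k < n" for k using uC[OF that] Csub unfolding B_def by blast
  have ssI: "ss ! k \<in> seqs {..<N i}" if "k < n" for k using acc that unfolding acceptable_def by auto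
  define ss' where "ss' = map (\<lambda>k. cadd (ss ! k) (u k)) [0..<n]"
  have ss'k: "ss' ! k = cadd (ss ! k) (u k)" if "k < n" for k using that by (simp add: ss'_def)
  have r1: "restr (ss' ! k) {..<N i} = ss ! k" if k: "k < n" for k
  proof -
    have "restr (cadd (ss ! k) (u k)) {..<N i} = ss ! k"
      using ssI[OF k] uB[OF k] by (auto simp: restr_def cadd_def seqs_def B_def fun_eq_iff)
    then show ?thesis using ss'k[OF k] by simp
  qed
  have acc': "acceptable N C (Suc i) (ss' ! k)" if k: "k < n" for k
    unfolding acceptable_def
  proof (intro conjI allI impI)
    show "ss' ! k \<in> seqs {..<N (Suc i)}"
      using ssI[OF k] uB[OF k] NiS by (auto simp: ss'k[OF k] cadd_def seqs_def B_def)
    fix j assume j: "j < Suc i"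
    show "restr (ss' ! k) {N j..<N (Suc j)} \<in> C j"
    proof (cases "j < i")
      case True
      then have "N (Suc j) \<le> N i" using Nle by auto
      then have "restr (ss' ! k) {N j..<N (Suc j)} = restr (ss ! k) {N j..<N (Suc j)}"
        using uB[OF k] by (auto simp: ss'k[OF k] restr_def cadd_def seqs_def B_def fun_eq_iff)
      then show ?thesis using acc k True unfolding acceptable_def by auto
    next
      case False
      then have ji: "j = i" using j by auto
      have "restr (ss' ! k) {N j..<N (Suc j)} = u k"
        using uB[OF k] ssI[OF k] ji by (auto simp: ss'k[OF k] restr_def cadd_def seqs_def B_def fun_eq_iff)
      then show ?thesis using uC[OF k] ji by simp
    qed
  qed
  have ts': "in_Tstar (P m) (N (Suc i)) (cadd (ss' ! k) (ss' ! l))" if pm: "\<pi> (k,l) = Some m" for k l m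
  proof -
    have kl: "k < l" "l < n" using tm pm unfolding tree_mapping_def by auto
    have l0: "0 < l" using kl by auto
    have pl: "par l < l" "\<pi> (par l, l) = Some (mm l)" using pmy[OF l0 kl(2)] by auto
    have "k = par l" using tm l0 kl pl pm unfolding tree_mapping_def by blast
    then have km: "k = par l" "m = mm l" using pl pm by auto
    have y1: "y l \<in> Pstar (P m)" and y2: "cadd (ss ! k) (ss ! l) = restr (y l) {..<N i}"
      using pmy[OF l0 kl(2)] km by auto
    have tw: "cadd (t k) (t l) = w l" using t(2) l0 kl km by auto
    have kn: "k < n" using kl by auto
    have "cadd (ss' ! k) (ss' ! l) = restr (y l) {..<N (Suc i)}"
    proof
      fix p
      have e1: "cadd (ss ! k) (ss ! l) p = restr (y l) {..<N i} p" using y2 by simp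
      have e2: "cadd (t k) (t l) p = w l p" using tw by simp
      have z1: "p \<notin> {..<N i} \<Longrightarrow> \<not> (ss ! k) p" "p \<notin> {..<N i} \<Longrightarrow> \<not> (ss ! l) p"
        using ssI[OF kn] ssI[OF kl(2)] unfolding seqs_def by auto
      have z2: "p \<notin> B \<Longrightarrow> \<not> u k p" "p \<notin> B \<Longrightarrow> \<not> u l p"
        using uB[OF kn] uB[OF kl(2)] unfolding seqs_def by auto
      have LHS: "cadd (ss' ! k) (ss' ! l) p = (((ss ! k) p \<noteq> u k p) \<noteq> ((ss ! l) p \<noteq> u l p))"
        by (simp add: ss'k[OF kn] ss'k[OF kl(2)] cadd_def)
      have "p < N i \<or> (N i \<le> p \<and> p < N (Suc i)) \<or> N (Suc i) \<le> p" by auto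
      then show "cadd (ss' ! k) (ss' ! l) p = restr (y l) {..<N (Suc i)} p"
      proof (elim disjE conjE)
        assume p: "p < N i"
        then have "p \<notin> B" by (simp add: B_def)
        then show ?thesis using LHS z2 e1 p NiS by (simp add: cadd_def restr_def)
      next
        assume p: "N i \<le> p" "p < N (Suc i)"
        then have "p \<in> B" "p \<notin> {..<N i}" by (auto simp: B_def)
        then show ?thesis using LHS z1 e2 p by (auto simp: cadd_def restr_def u_def w_def)
      next
        assume p: "N (Suc i) \<le> p"
        then have "p \<notin> B" "p \<notin> {..<N i}" using NiS by (auto simp: B_def)
        then show ?thesis using LHS z1 z2 p by (simp add: restr_def)
      qed
    qed
    then show ?thesis using y1 unfolding in_Tstar_def by blast
  qed
  have "(\<pi>, Suc i, ss') \<in> S"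
    unfolding Sset_def using tm nle NiS acc' ts' by (auto simp: ss'_def)
  moreover have "length ss' = length ss" by (simp add: ss'_def n_def)
  ultimately show ?thesis using r1 n_def by auto
qed

definition ext_le :: "(nat \<times> nat \<Rightarrow> nat option) \<times> nat \<times> (nat \<Rightarrow> bool) list \<Rightarrow> (nat \<times> nat \<Rightarrow> nat option) \<times> nat \<times> (nat \<Rightarrow> bool) list \<Rightarrow> bool" where
  "ext_le \<sigma>' \<sigma> \<longleftrightarrow> (case \<sigma>' of (\<pi>', i', ss') \<Rightarrow> case \<sigma> of (\<pi>, i, ss) \<Rightarrow> i \<le> i' \<and> length ss \<le> length ss' \<and>
     (\<forall>k l. l < length ss \<longrightarrow> \<pi>' (k,l) = \<pi> (k,l)) \<and> (\<forall>k<length ss. restr (ss' ! k) {..<N i} = ss ! k))"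

lemma ext_le_simp[simp]: "ext_le (\<pi>', i', ss') (\<pi>, i, ss) \<longleftrightarrow> i \<le> i' \<and> length ss \<le> length ss' \<and>
     (\<forall>k l. l < length ss \<longrightarrow> \<pi>' (k,l) = \<pi> (k,l)) \<and> (\<forall>k<length ss. restr (ss' ! k) {..<N i} = ss ! k)"
  by (simp add: ext_le_def)

lemma ext_le_refl: "(\<pi>, i, ss) \<in> S \<Longrightarrow> ext_le (\<pi>, i, ss) (\<pi>, i, ss)"
  by (auto simp: Sset_def acceptable_def seqs_restr)

lemma ext_le_trans:
  assumes "ext_le (\<pi>'', i'', ss'') (\<pi>', i', ss')" "ext_le (\<pi>', i', ss') (\<pi>, i, ss)"
  shows "ext_le (\<pi>'', i'', ss'') (\<pi>, i, ss)"
proof -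
  have NN: "N i \<le> N i'" using assms Nle by auto
  have "restr (ss'' ! k) {..<N i} = ss ! k" if k: "k < length ss" for k
  proof -
    have "restr (ss'' ! k) {..<N i} = restr (restr (ss'' ! k) {..<N i'}) {..<N i}"
      by (simp add: restr_lt_lt NN)
    also have "\<dots> = restr (ss' ! k) {..<N i}" using assms k by auto
    also have "\<dots> = ss ! k" using assms k by auto
    finally show ?thesis .
  qed
  then show ?thesis using assms by auto
qed

lemma fusion:
  assumes inS: "\<And>m. (pq m, lv m, ls m) \<in> S"
    and ext: "\<And>m. ext_le (pq (Suc m), lv (Suc m), ls (Suc m)) (pq m, lv m, ls m)"
    and lvs: "\<And>m. lv m < lv (Suc m)"
  shows "\<exists>x0. \<forall>m. x0 \<in> U (pq m, lv m, ls m)"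
proof -
  have extd: "ext_le (pq (m+d), lv (m+d), ls (m+d)) (pq m, lv m, ls m)" for m d
  proof (induction d)
    case 0
    show ?case using ext_le_refl[OF inS[of m]] by simp
  next
    case (Suc d)
    show ?case using ext_le_trans[OF ext[of "m+d"] Suc.IH] by simp
  qed
  have extm: "ext_le (pq m', lv m', ls m') (pq m, lv m, ls m)" if "m \<le> m'" for m m'
    using extd[of m "m'-m"] that by simp
  have lvm: "m \<le> lv m" for m
  proof (induction m)
    case (Suc m) then show ?case using lvs[of m] by auto
  qed auto
  define nn where "nn m = length (ls m)" for m
  have nnmono: "m \<le> m' \<Longrightarrow> nn m \<le> nn m'" for m m' using extm[of m m'] by (simp add: nn_def)
  have coh: "(ls m' ! k) p = (ls m ! k) p" if "k < nn m" "m \<le> m'" "p < N (lv m)" for k m m' p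
  proof -
    have "restr (ls m' ! k) {..<N (lv m)} = ls m ! k" using extm[OF that(2)] that(1) by (simp add: nn_def)
    then have "restr (ls m' ! k) {..<N (lv m)} p = (ls m ! k) p" by simp
    then show ?thesis using that(3) by (simp add: restr_def)
  qed
  have accm: "acceptable N C (lv m) (ls m ! k)" if "k < nn m" for k m
  proof -
    have "\<forall>j<length (ls m). acceptable N C (lv m) (ls m ! j)" using inS[of m] by (simp add: Sset_def)
    then show ?thesis using that by (simp add: nn_def)
  qed
  define mk where "mk k = (LEAST m. k < nn m)" for k
  define x where "x k p = (ls (mk k + Suc p) ! k) p" for k p
  have c1: "restr (x k) {..<N (lv m)} = ls m ! k" if k: "k < nn m" for k m
  proof
    fix p
    show "restr (x k) {..<N (lv m)} p = (ls m ! k) p"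
    proof (cases "p < N (lv m)")
      case True
      define m2 where "m2 = mk k + Suc p"
      have "k < nn (mk k)" unfolding mk_def using k by (rule LeastI)
      then have k2: "k < nn m2" using nnmono[of "mk k" m2] by (simp add: m2_def)
      have "p < m2" by (simp add: m2_def)
      also have "m2 \<le> lv m2" by (rule lvm)
      also have "lv m2 \<le> N (lv m2)" by (rule Nge)
      finally have p2: "p < N (lv m2)" .
      have "(ls (max m m2) ! k) p = (ls m ! k) p" by (rule coh[OF k max.cobounded1 True])
      moreover have "(ls (max m m2) ! k) p = (ls m2 ! k) p" by (rule coh[OF k2 max.cobounded2 p2])
      ultimately show ?thesis using True by (simp add: restr_def x_def m2_def)
    next
      case False
      then show ?thesis using accm[OF k] by (auto simp: restr_def acceptable_def seqs_def)
    qed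
  qed
  have c2: "x k \<in> H" if k: "k < nn m" for k m
    unfolding Hset_def
  proof (intro CollectI allI)
    fix i'
    define m' where "m' = m + Suc i'"
    have km: "k < nn m'" using k nnmono[of m m'] by (simp add: m'_def)
    have "Suc i' \<le> lv m'" using lvm[of m'] by (simp add: m'_def)
    then have i'l: "i' < lv m'" and Nsl: "N (Suc i') \<le> N (lv m')" using Nle by auto
    have "restr (x k) {N i'..<N (Suc i')} = restr (restr (x k) {..<N (lv m')}) {N i'..<N (Suc i')}"
      using Nsl by (auto simp: restr_def fun_eq_iff)
    also have "\<dots> = restr (ls m' ! k) {N i'..<N (Suc i')}" using c1[OF km] by simp
    also have "\<dots> \<in> C i'" using accm[OF km] i'l by (auto simp: acceptable_def)
    finally show "restr (x k) {N i'..<N (Suc i')} \<in> C i'" .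
  qed
  have "x 0 \<in> U (pq m, lv m, ls m)" for m
  proof -
    have tm: "tree_mapping (pq m) (nn m)" and nle: "nn m \<le> N (lv m)" using inS[of m] by (auto simp: Sset_def nn_def)
    then have n0: "0 < nn m" by (auto simp: tree_mapping_def)
    have "(pq m, j, map (\<lambda>k. restr (x k) {..<N j}) [0..<nn m]) \<in> S" if j: "lv m < j" for j
    proof -
      define m' where "m' = m + j"
      have mm: "m \<le> m'" by (simp add: m'_def)
      have jl: "j \<le> lv m'" using lvm[of m'] by (simp add: m'_def)
      have e: "ext_le (pq m', lv m', ls m') (pq m, lv m, ls m)" using extm[OF mm] .
      have NN: "N j \<le> N (lv m')" using jl Nle by auto
      have "(pq m, j, map (\<lambda>k. restr (ls m' ! (\<lambda>k. k) k) {..<N j}) [0..<nn m]) \<in> S"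
      proof (rule Sset_relabel[OF inS[of m'] tm])
        show "\<forall>k<nn m. k < length (ls m')" using nnmono[OF mm] by (auto simp: nn_def)
        show "\<forall>k l ma. pq m (k, l) = Some ma \<longrightarrow> pq m' (k, l) = Some ma"
        proof (intro allI impI)
          fix k l ma assume pm: "pq m (k, l) = Some ma"
          then have "l < nn m" using tm unfolding tree_mapping_def by blast
          then have "pq m' (k, l) = pq m (k, l)" using e by (simp add: nn_def)
          then show "pq m' (k, l) = Some ma" using pm by simp
        qed
        show "j \<le> lv m'" by (rule jl)
        show "nn m \<le> N j" using nle Nlt[OF j] by auto
      qed
      moreover have "map (\<lambda>k. restr (ls m' ! (\<lambda>k. k) k) {..<N j}) [0..<nn m] = map (\<lambda>k. restr (x k) {..<N j}) [0..<nn m]"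
      proof (rule map_cong[OF refl])
        fix k assume "k \<in> set [0..<nn m]"
        then have km: "k < nn m'" using nnmono[OF mm] by auto
        have "restr (x k) {..<N j} = restr (restr (x k) {..<N (lv m')}) {..<N j}" by (simp add: restr_lt_lt NN)
        also have "\<dots> = restr (ls m' ! k) {..<N j}" using c1[OF km] by simp
        finally show "restr (ls m' ! (\<lambda>k. k) k) {..<N j} = restr (x k) {..<N j}" by simp
      qed
      ultimately show ?thesis by simp
    qed
    then have "\<forall>j > lv m. (pq m, j, map (\<lambda>k. restr (x k) {..<N j}) [0..<length (ls m)]) \<in> S"
      by (simp add: nn_def)
    moreover have "\<forall>j < length (ls m). x j \<in> H \<and> restr (x j) {..<N (lv m)} = ls m ! j"
      using c1 c2 by (simp add: nn_def)
    moreover have "x 0 \<in> H" using c2 n0 by blast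
    ultimately show ?thesis unfolding Uset_def by blast

  qed
  then show ?thesis by blast
qed

lemma nonempty:
  assumes A: "(\<pi>, i, ss) \<in> S"
  shows "U (\<pi>, i, ss) \<noteq> {}"
proof -
  define Q where "Q m prev ss' \<longleftrightarrow> (\<pi>, Suc (i + m), ss') \<in> S \<and> length ss' = length prev \<and> (\<forall>k<length prev. restr (ss' ! k) {..<N (i + m)} = prev ! k)" for m prev ss'
  define sss where "sss = rec_nat ss (\<lambda>m prev. SOME ss'. Q m prev ss')"
  have s0: "sss 0 = ss" and sS: "sss (Suc m) = (SOME ss'. Q m (sss m) ss')" for m by (simp_all add: sss_def)
  have inS: "(\<pi>, i + m, sss m) \<in> S \<and> (Q m (sss m) (sss (Suc m)))" for m
  proof (induction m)
    case 0
    have "\<exists>ss'. Q 0 ss ss'" using one_step[OF A] by (simp add: Q_def)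
    then show ?case using A someI_ex[of "Q 0 ss"] by (simp add: s0 sS)
  next
    case (Suc m)
    then have a: "(\<pi>, Suc (i + m), sss (Suc m)) \<in> S" by (simp add: Q_def)
    have "\<exists>ss'. Q (Suc m) (sss (Suc m)) ss'" using one_step[OF a] by (simp add: Q_def)
    then show ?case using a someI_ex[of "Q (Suc m) (sss (Suc m))"] by (simp add: sS[of "Suc m"])
  qed
  have "\<exists>x0. \<forall>m. x0 \<in> U ((\<lambda>_. \<pi>) m, (\<lambda>m. i + m) m, sss m)"
  proof (rule fusion)
    show "((\<lambda>_. \<pi>) m, i + m, sss m) \<in> S" for m using inS by simp
    show "ext_le ((\<lambda>_. \<pi>) (Suc m), i + Suc m, sss (Suc m)) ((\<lambda>_. \<pi>) m, i + m, sss m)" for m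
      using inS[of m] by (auto simp: Q_def)
    show "i + m < i + Suc m" for m by simp
  qed
  then obtain x0 where "\<forall>m. x0 \<in> U (\<pi>, i + m, sss m)" by auto
  then have "x0 \<in> U (\<pi>, i + 0, sss 0)" by blast
  then show ?thesis using s0 by auto
qed

lemma tm_combine:
  assumes t1: "tree_mapping \<pi>1 n1" and t2: "tree_mapping \<pi>2 n2"
    and n3: "n3 = n1 + n2 - 1"
    and p3: "\<And>k l. \<pi>3 (k,l) = (if l < n1 then \<pi>1 (k,l) else if l < n3 then
        (if k = 0 then \<pi>2 (0, l+1-n1) else if n1 \<le> k then \<pi>2 (k+1-n1, l+1-n1) else None) else None)"
  shows "tree_mapping \<pi>3 n3"
proof -
  have n1: "1 \<le> n1" and n2: "1 \<le> n2" using t1 t2 by (auto simp: tree_mapping_def)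
  have a1: "\<And>k l. \<pi>1 (k,l) \<noteq> None \<Longrightarrow> k < l \<and> l < n1" using t1 by (auto simp: tree_mapping_def)
  have a2: "\<And>k l. \<pi>2 (k,l) \<noteq> None \<Longrightarrow> k < l \<and> l < n2" using t2 by (auto simp: tree_mapping_def)
  have b1: "\<And>l. 0 < l \<Longrightarrow> l < n1 \<Longrightarrow> \<exists>!k. k < l \<and> \<pi>1 (k,l) \<noteq> None" using t1 by (auto simp: tree_mapping_def)
  have b2: "\<And>l. 0 < l \<Longrightarrow> l < n2 \<Longrightarrow> \<exists>!k. k < l \<and> \<pi>2 (k,l) \<noteq> None" using t2 by (auto simp: tree_mapping_def)
  have A: "k < l \<and> l < n3" if "\<pi>3 (k,l) \<noteq> None" for k l
  proof (cases "l < n1")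
    case True
    then show ?thesis using that a1[of k l] p3[of k l] n3 n2 by auto
  next
    case False
    then have ln3: "l < n3" using that p3[of k l] by (auto split: if_splits)
    show ?thesis
    proof (cases "k = 0")
      case True then show ?thesis using False n1 ln3 by auto
    next
      case k0: False
      then have kn1: "n1 \<le> k" and ne: "\<pi>2 (k+1-n1, l+1-n1) \<noteq> None" using that p3[of k l] False ln3 by (auto split: if_splits)
      then have "k+1-n1 < l+1-n1" using a2 by blast
      then show ?thesis using ln3 by auto
    qed
  qed
  have B: "\<exists>!k. k < l \<and> \<pi>3 (k,l) \<noteq> None" if l: "0 < l" "l < n3" for l
  proof (cases "l < n1")
    case True
    then show ?thesis using b1[OF l(1) True] p3 by simp
  next
    case False
    define l' where "l' = l + 1 - n1"
    have l': "0 < l'" "l' < n2" using False l n3 by (auto simp: l'_def)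
    obtain k' where k': "k' < l'" "\<pi>2 (k',l') \<noteq> None" and uq: "\<And>j. j < l' \<Longrightarrow> \<pi>2 (j,l') \<noteq> None \<Longrightarrow> j = k'"
      using b2[OF l'] by metis
    define g where "g = (if k' = 0 then 0 else k' + n1 - 1)"
    show ?thesis
    proof (rule ex1I[of _ g])
      show "g < l \<and> \<pi>3 (g, l) \<noteq> None"
      proof (cases "k' = 0")
        case True then show ?thesis using k' False l n1 p3[of 0 l] by (simp add: g_def l'_def)
      next
        case k0: False
        then have "n1 \<le> g" "g + 1 - n1 = k'" "g < l" "g \<noteq> 0" using k' n1 by (auto simp: g_def l'_def)
        then show ?thesis using k' False l p3[of g l] by (simp add: l'_def)
      qed
    next
      fix j assume j: "j < l \<and> \<pi>3 (j, l) \<noteq> None"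
      have pj: "\<pi>3 (j,l) = (if j = 0 then \<pi>2 (0, l') else if n1 \<le> j then \<pi>2 (j+1-n1, l') else None)"
        using p3[of j l] False l by (simp add: l'_def)
      show "j = g"
      proof (cases "j = 0")
        case True
        then have "\<pi>2 (0, l') \<noteq> None" using j pj by simp
        then have "k' = 0" using uq[of 0] l' by auto
        then show ?thesis using True by (simp add: g_def)
      next
        case j0: False
        then have jn: "n1 \<le> j" and ne: "\<pi>2 (j+1-n1, l') \<noteq> None" using j pj by (auto split: if_splits)
        then have "j+1-n1 < l'" using a2 by blast
        then have "j+1-n1 = k'" using uq ne by blast
        then show ?thesis using jn j0 n1 by (auto simp: g_def)
      qed
    qed
  qed
  show ?thesis unfolding tree_mapping_def using A B n1 n2 n3 by auto
qed

lemma Sset_intro: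
  assumes "tree_mapping \<pi> n" "n \<le> N j" "\<forall>k<n. acceptable N C j (f k)"
    "\<forall>k l m. k < l \<longrightarrow> l < n \<longrightarrow> \<pi> (k,l) = Some m \<longrightarrow> in_Tstar (P m) (N j) (cadd (f k) (f l))"
  shows "(\<pi>, j, map f [0..<n]) \<in> S"
proof -
  have "\<And>k l. \<pi> (k,l) \<noteq> None \<Longrightarrow> k < l \<and> l < n" using assms(1) by (auto simp: tree_mapping_def)
  then have "\<forall>k l m. \<pi> (k,l) = Some m \<longrightarrow> in_Tstar (P m) (N j) (cadd (map f [0..<n] ! k) (map f [0..<n] ! l))"
  proof (intro allI impI)
    fix k l m assume pm: "\<pi> (k,l) = Some m"
    then have kl: "k < l" "l < n" using \<open>\<And>k l. \<pi> (k,l) \<noteq> None \<Longrightarrow> k < l \<and> l < n\<close> by auto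
    then have "in_Tstar (P m) (N j) (cadd (f k) (f l))" using assms(4) pm by blast
    then show "in_Tstar (P m) (N j) (cadd (map f [0..<n] ! k) (map f [0..<n] ! l))" using kl by simp
  qed
  then show ?thesis using assms unfolding Sset_def by simp
qed

lemma Sset_elim:
  assumes "(\<pi>, j, map f [0..<n]) \<in> S"
  shows "tree_mapping \<pi> n \<and> n \<le> N j \<and> (\<forall>k<n. acceptable N C j (f k)) \<and>
    (\<forall>k l m. \<pi> (k,l) = Some m \<longrightarrow> in_Tstar (P m) (N j) (cadd (f k) (f l)))"
proof -
  have tm: "tree_mapping \<pi> n" using assms by (simp add: Sset_def)
  have "\<And>k l. \<pi> (k,l) \<noteq> None \<Longrightarrow> k < l \<and> l < n" using tm by (auto simp: tree_mapping_def)
  moreover have "\<forall>k l m. \<pi> (k,l) = Some m \<longrightarrow> in_Tstar (P m) (N j) (cadd (map f [0..<n] ! k) (map f [0..<n] ! l))"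
    using assms by (simp add: Sset_def)
  ultimately have "\<forall>k l m. \<pi> (k,l) = Some m \<longrightarrow> in_Tstar (P m) (N j) (cadd (f k) (f l))"
  proof (intro allI impI)
    fix k l m assume A: "\<And>k l. \<pi> (k,l) \<noteq> None \<Longrightarrow> k < l \<and> l < n"
      and B: "\<forall>k l m. \<pi> (k,l) = Some m \<longrightarrow> in_Tstar (P m) (N j) (cadd (map f [0..<n] ! k) (map f [0..<n] ! l))"
      and pm: "\<pi> (k,l) = Some m"
    then have kl: "k < l" "l < n" by auto
    have "in_Tstar (P m) (N j) (cadd (map f [0..<n] ! k) (map f [0..<n] ! l))" using B pm by blast
    then show "in_Tstar (P m) (N j) (cadd (f k) (f l))" using kl by simp
  qed
  then show ?thesis using assms tm by (simp add: Sset_def)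
qed

lemma Uset_intro:
  assumes "\<forall>k<length ss. w k \<in> H \<and> restr (w k) {..<N i} = ss ! k"
    "\<forall>j>i. (\<pi>, j, map (\<lambda>k. restr (w k) {..<N j}) [0..<length ss]) \<in> S" "w 0 \<in> H"
  shows "w 0 \<in> U (\<pi>, i, ss)"
  using assms unfolding Uset_def by auto

lemma Uset_elim:
  assumes "y \<in> U (\<pi>, i, ss)"
  shows "\<exists>w. w 0 = y \<and> y \<in> H \<and> (\<forall>k<length ss. w k \<in> H \<and> restr (w k) {..<N i} = ss ! k) \<and>
    (\<forall>j>i. (\<pi>, j, map (\<lambda>k. restr (w k) {..<N j}) [0..<length ss]) \<in> S)"
  using assms unfolding Uset_def by auto

lemma combine:
  assumes S1: "(\<pi>1, i1, ss1) \<in> S" and S2: "(\<pi>2, i2, ss2) \<in> S"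
    and u1: "x0 \<in> U (\<pi>1, i1, ss1)" and u2: "x0 \<in> U (\<pi>2, i2, ss2)"
  shows "\<exists>\<pi>3 i3 ss3. (\<pi>3, i3, ss3) \<in> S \<and> ext_le (\<pi>3, i3, ss3) (\<pi>1, i1, ss1) \<and> i1 < i3 \<and>
     x0 \<in> U (\<pi>3, i3, ss3) \<and> U (\<pi>3, i3, ss3) \<subseteq> U (\<pi>1, i1, ss1) \<inter> U (\<pi>2, i2, ss2)"
proof -
  define n1 where "n1 = length ss1"
  define n2 where "n2 = length ss2"
  have tm1: "tree_mapping \<pi>1 n1" using S1 by (simp add: Sset_def n1_def)
  have tm2: "tree_mapping \<pi>2 n2" using S2 by (simp add: Sset_def n2_def)
  have n1p: "1 \<le> n1" using tm1 by (simp add: tree_mapping_def)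
  have n2p: "1 \<le> n2" using tm2 by (simp add: tree_mapping_def)
  obtain x where x0: "x 0 = x0" and xH: "\<forall>k<n1. x k \<in> H \<and> restr (x k) {..<N i1} = ss1 ! k"
    and xS: "\<forall>j>i1. (\<pi>1, j, map (\<lambda>k. restr (x k) {..<N j}) [0..<n1]) \<in> S"
    using Uset_elim[OF u1] unfolding n1_def by blast
  obtain x' where x'0: "x' 0 = x0" and x'H: "\<forall>k<n2. x' k \<in> H \<and> restr (x' k) {..<N i2} = ss2 ! k"
    and x'S: "\<forall>j>i2. (\<pi>2, j, map (\<lambda>k. restr (x' k) {..<N j}) [0..<n2]) \<in> S"
    using Uset_elim[OF u2] unfolding n2_def by blast
  define n3 where "n3 = n1 + n2 - 1"
  define \<pi>3 where "\<pi>3 = (\<lambda>(k,l). if l < n1 then \<pi>1 (k,l) else if l < n3 then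
        (if k = 0 then \<pi>2 (0, l+1-n1) else if n1 \<le> k then \<pi>2 (k+1-n1, l+1-n1) else None) else None)"
  have p3: "\<And>k l. \<pi>3 (k,l) = (if l < n1 then \<pi>1 (k,l) else if l < n3 then
        (if k = 0 then \<pi>2 (0, l+1-n1) else if n1 \<le> k then \<pi>2 (k+1-n1, l+1-n1) else None) else None)"
    by (simp add: \<pi>3_def)
  have tm3: "tree_mapping \<pi>3 n3" by (rule tm_combine[OF tm1 tm2 n3_def p3])
  define g where "g k = (if k = 0 then 0 else k + n1 - 1)" for k
  define z where "z k = (if k < n1 then x k else x' (k + 1 - n1))" for k
  have zg: "z (g k) = x' k" for k
  proof (cases "k = 0")
    case True then show ?thesis using n1p x0 x'0 by (simp add: g_def z_def)
  next
    case False
    then have "\<not> (k + n1 - 1 < n1)" "k + n1 - 1 + 1 - n1 = k" using n1p by auto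
    then show ?thesis using False by (simp add: g_def z_def)
  qed
  have gl: "g k < n3" if "k < n2" for k using that n1p n2p by (auto simp: g_def n3_def)
  have n13: "n1 \<le> n3" using n2p by (simp add: n3_def)
  have pg: "\<forall>k l m. \<pi>2 (k,l) = Some m \<longrightarrow> \<pi>3 (g k, g l) = Some m"
  proof (intro allI impI)
    fix k l m assume pm: "\<pi>2 (k,l) = Some m"
    then have kl: "k < l" "l < n2" using tm2 by (auto simp: tree_mapping_def)
    then have gl': "g l = l + n1 - 1" "\<not> g l < n1" "g l < n3" "g l + 1 - n1 = l" using n1p by (auto simp: g_def n3_def)
    show "\<pi>3 (g k, g l) = Some m"
    proof (cases "k = 0")
      case True then show ?thesis using gl' pm p3[of 0 "g l"] by (simp add: g_def)
    next
      case False
      then have "g k \<noteq> 0" "n1 \<le> g k" "g k + 1 - n1 = k" using n1p by (auto simp: g_def)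
      then show ?thesis using gl' pm p3[of "g k" "g l"] by simp
    qed
  qed
  have zH: "z k \<in> H" if "k < n3" for k
    using xH x'H that by (auto simp: z_def n3_def)
  have G: "(\<pi>3, j, map (\<lambda>k. restr (z k) {..<N j}) [0..<n3]) \<in> S" if j: "i1 < j" "i2 < j" "n3 \<le> N j" for j
  proof (rule Sset_intro[OF tm3 j(3)])
    note E1 = Sset_elim[OF xS[rule_format, OF j(1)]]
    note E2 = Sset_elim[OF x'S[rule_format, OF j(2)]]
    show "\<forall>k<n3. acceptable N C j (restr (z k) {..<N j})"
    proof (intro allI impI)
      fix k assume k: "k < n3"
      show "acceptable N C j (restr (z k) {..<N j})"
      proof (cases "k < n1")
        case True then show ?thesis using E1 by (simp add: z_def)
      next
        case False
        then have "k + 1 - n1 < n2" using k by (simp add: n3_def)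
        then show ?thesis using E2 False by (simp add: z_def)
      qed
    qed
    show "\<forall>k l m. k < l \<longrightarrow> l < n3 \<longrightarrow> \<pi>3 (k,l) = Some m \<longrightarrow> in_Tstar (P m) (N j) (cadd (restr (z k) {..<N j}) (restr (z l) {..<N j}))"
    proof (intro allI impI)
      fix k l m assume kl: "k < l" "l < n3" and pm: "\<pi>3 (k,l) = Some m"
      show "in_Tstar (P m) (N j) (cadd (restr (z k) {..<N j}) (restr (z l) {..<N j}))"
      proof (cases "l < n1")
        case True
        then have "\<pi>1 (k,l) = Some m" using pm p3[of k l] by simp
        then show ?thesis using E1 True kl by (simp add: z_def)
      next
        case False
        show ?thesis
        proof (cases "k = 0")
          case True
          then have "\<pi>2 (0, l+1-n1) = Some m" using pm p3[of k l] False kl by simp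
          then have "in_Tstar (P m) (N j) (cadd (restr (x' 0) {..<N j}) (restr (x' (l+1-n1)) {..<N j}))" using E2 by blast
          then show ?thesis using True False n1p x0 x'0 by (simp add: z_def)
        next
          case k0: False
          then have kn: "n1 \<le> k" and "\<pi>2 (k+1-n1, l+1-n1) = Some m" using pm p3[of k l] False kl by (auto split: if_splits)
          then have "in_Tstar (P m) (N j) (cadd (restr (x' (k+1-n1)) {..<N j}) (restr (x' (l+1-n1)) {..<N j}))" using E2 by blast
          then show ?thesis using kn False by (simp add: z_def)
        qed
      qed
    qed
  qed
  define i3 where "i3 = max i1 i2 + n3 + 1"
  define ss3 where "ss3 = map (\<lambda>k. restr (z k) {..<N i3}) [0..<n3]"
  have i3b: "i1 < i3" "i2 < i3" "n3 \<le> N i3" using Nge[of i3] by (auto simp: i3_def)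
  have N13: "N i1 \<le> N i3" "N i2 \<le> N i3" using i3b Nle by auto
  have S3: "(\<pi>3, i3, ss3) \<in> S" unfolding ss3_def by (rule G[OF i3b])
  have len3: "length ss3 = n3" by (simp add: ss3_def)
  have U3: "x0 \<in> U (\<pi>3, i3, ss3)"
  proof -
    have "z 0 \<in> U (\<pi>3, i3, ss3)"
    proof (rule Uset_intro)
      show "\<forall>k<length ss3. z k \<in> H \<and> restr (z k) {..<N i3} = ss3 ! k" using zH by (simp add: ss3_def)
      show "\<forall>j>i3. (\<pi>3, j, map (\<lambda>k. restr (z k) {..<N j}) [0..<length ss3]) \<in> S"
      proof (intro allI impI)
        fix j assume j: "i3 < j"
        have "n3 \<le> N j" using i3b Nlt[OF j] by auto
        then show "(\<pi>3, j, map (\<lambda>k. restr (z k) {..<N j}) [0..<length ss3]) \<in> S"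
          using G i3b j len3 by simp
      qed
      show "z 0 \<in> H" using zH n13 n1p by auto
    qed
    moreover have "z 0 = x0" using n1p x0 by (simp add: z_def)
    ultimately show ?thesis by simp
  qed
  have ext1: "ext_le (\<pi>3, i3, ss3) (\<pi>1, i1, ss1)"
  proof -
    have "restr (ss3 ! k) {..<N i1} = ss1 ! k" if k: "k < n1" for k
    proof -
      have "restr (ss3 ! k) {..<N i1} = restr (restr (z k) {..<N i3}) {..<N i1}" using k n13 by (simp add: ss3_def)
      also have "\<dots> = restr (x k) {..<N i1}" using k N13 by (simp add: restr_lt_lt z_def)
      finally show ?thesis using xH k by simp
    qed
    then show ?thesis using i3b n13 len3 p3 by (simp add: n1_def)
  qed
  have sub: "U (\<pi>3, i3, ss3) \<subseteq> U (\<pi>1, i1, ss1) \<inter> U (\<pi>2, i2, ss2)"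
  proof
    fix y assume y: "y \<in> U (\<pi>3, i3, ss3)"
    obtain w where w0: "w 0 = y" and yH: "y \<in> H" and wH: "\<forall>k<n3. w k \<in> H \<and> restr (w k) {..<N i3} = ss3 ! k"
      and wS: "\<forall>j>i3. (\<pi>3, j, map (\<lambda>k. restr (w k) {..<N j}) [0..<n3]) \<in> S"
      using Uset_elim[OF y] len3 by metis
    have wz: "restr (w k) {..<N j} = restr (z k) {..<N j}" if "k < n3" "j \<le> i3" for k j
    proof -
      have NN: "N j \<le> N i3" using that Nle by auto
      have "restr (w k) {..<N j} = restr (restr (w k) {..<N i3}) {..<N j}" by (simp add: restr_lt_lt NN)
      also have "\<dots> = restr (restr (z k) {..<N i3}) {..<N j}" using wH that by (simp add: ss3_def)
      also have "\<dots> = restr (z k) {..<N j}" by (simp add: restr_lt_lt NN)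
      finally show ?thesis .
    qed
    have "w 0 \<in> U (\<pi>1, i1, ss1)"
    proof (rule Uset_intro)
      show "\<forall>k<length ss1. w k \<in> H \<and> restr (w k) {..<N i1} = ss1 ! k"
      proof (intro allI impI conjI)
        fix k assume k: "k < length ss1"
        then have k3: "k < n3" "k < n1" using n13 by (auto simp: n1_def)
        show "w k \<in> H" using wH k3 by auto
        show "restr (w k) {..<N i1} = ss1 ! k" using wz[OF k3(1) order.strict_implies_order[OF i3b(1)]] xH k3 by (simp add: z_def)
      qed
      show "\<forall>j>i1. (\<pi>1, j, map (\<lambda>k. restr (w k) {..<N j}) [0..<length ss1]) \<in> S"
      proof (intro allI impI)
        fix j assume j: "i1 < j"
        show "(\<pi>1, j, map (\<lambda>k. restr (w k) {..<N j}) [0..<length ss1]) \<in> S"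
        proof (cases "j \<le> i3")
          case True
          have eq: "map (\<lambda>k. restr (w k) {..<N j}) [0..<n1] = map (\<lambda>k. restr (x k) {..<N j}) [0..<n1]"
            using wz[OF _ True] n13 by (auto simp: z_def)
          have "(\<pi>1, j, map (\<lambda>k. restr (x k) {..<N j}) [0..<n1]) \<in> S" using xS j by blast
          then have "(\<pi>1, j, map (\<lambda>k. restr (w k) {..<N j}) [0..<n1]) \<in> S" by (simp only: eq)
          then show ?thesis by (simp only: n1_def)
        next
          case False
          then have j3: "i3 < j" by simp
          have "(\<pi>1, j, map (\<lambda>k. restr (map (\<lambda>k. restr (w k) {..<N j}) [0..<n3] ! (\<lambda>k. k) k) {..<N j}) [0..<n1]) \<in> S"
          proof (rule Sset_relabel[OF wS[rule_format, OF j3] tm1])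
            show "\<forall>k<n1. k < length (map (\<lambda>k. restr (w k) {..<N j}) [0..<n3])" using n13 by simp
            show "\<forall>k l m. \<pi>1 (k, l) = Some m \<longrightarrow> \<pi>3 (k, l) = Some m"
            proof (intro allI impI)
              fix k l m assume "\<pi>1 (k,l) = Some m"
              moreover then have "l < n1" using tm1 by (auto simp: tree_mapping_def)
              ultimately show "\<pi>3 (k, l) = Some m" using p3 by simp
            qed
            show "j \<le> j" by simp
            show "n1 \<le> N j" using n13 i3b Nlt[OF j3] by auto
          qed
          moreover have "map (\<lambda>k. restr (map (\<lambda>k. restr (w k) {..<N j}) [0..<n3] ! (\<lambda>k. k) k) {..<N j}) [0..<n1]
              = map (\<lambda>k. restr (w k) {..<N j}) [0..<n1]"
            using n13 by (auto simp: restr_restr)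
          ultimately have "(\<pi>1, j, map (\<lambda>k. restr (w k) {..<N j}) [0..<n1]) \<in> S" by (simp only:)
          then show ?thesis by (simp only: n1_def)
        qed
      qed
      show "w 0 \<in> H" using w0 yH by simp
    qed
    moreover have "(\<lambda>k. w (g k)) 0 \<in> U (\<pi>2, i2, ss2)"
    proof (rule Uset_intro)
      show "\<forall>k<length ss2. w (g k) \<in> H \<and> restr (w (g k)) {..<N i2} = ss2 ! k"
      proof (intro allI impI conjI)
        fix k assume k: "k < length ss2"
        then have k3: "g k < n3" "k < n2" using gl by (auto simp: n2_def)
        show "w (g k) \<in> H" using wH k3 by auto
        show "restr (w (g k)) {..<N i2} = ss2 ! k" using wz[OF k3(1) order.strict_implies_order[OF i3b(2)]] x'H k3 zg by simp
      qed
      show "\<forall>j>i2. (\<pi>2, j, map (\<lambda>k. restr (w (g k)) {..<N j}) [0..<length ss2]) \<in> S"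
      proof (intro allI impI)
        fix j assume j: "i2 < j"
        show "(\<pi>2, j, map (\<lambda>k. restr (w (g k)) {..<N j}) [0..<length ss2]) \<in> S"
        proof (cases "j \<le> i3")
          case True
          have eq: "map (\<lambda>k. restr (w (g k)) {..<N j}) [0..<n2] = map (\<lambda>k. restr (x' k) {..<N j}) [0..<n2]"
            using wz[OF _ True] gl zg by auto
          have "(\<pi>2, j, map (\<lambda>k. restr (x' k) {..<N j}) [0..<n2]) \<in> S" using x'S j by blast
          then have "(\<pi>2, j, map (\<lambda>k. restr (w (g k)) {..<N j}) [0..<n2]) \<in> S" by (simp only: eq)
          then show ?thesis by (simp only: n2_def)
        next
          case False
          then have j3: "i3 < j" by simp
          have "(\<pi>2, j, map (\<lambda>k. restr (map (\<lambda>k. restr (w k) {..<N j}) [0..<n3] ! g k) {..<N j}) [0..<n2]) \<in> S"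
          proof (rule Sset_relabel[OF wS[rule_format, OF j3] tm2])
            show "\<forall>k<n2. g k < length (map (\<lambda>k. restr (w k) {..<N j}) [0..<n3])" using gl by simp
            show "\<forall>k l m. \<pi>2 (k, l) = Some m \<longrightarrow> \<pi>3 (g k, g l) = Some m" by (rule pg)
            show "j \<le> j" by simp
            show "n2 \<le> N j" using n2p n1p i3b Nlt[OF j3] by (auto simp: n3_def)
          qed
          moreover have "map (\<lambda>k. restr (map (\<lambda>k. restr (w k) {..<N j}) [0..<n3] ! g k) {..<N j}) [0..<n2]
              = map (\<lambda>k. restr (w (g k)) {..<N j}) [0..<n2]"
            using gl by (auto simp: restr_restr)
          ultimately have "(\<pi>2, j, map (\<lambda>k. restr (w (g k)) {..<N j}) [0..<n2]) \<in> S" by (simp only:)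
          then show ?thesis by (simp only: n2_def)
        qed
      qed
      show "(\<lambda>k. w (g k)) 0 \<in> H" using w0 yH by (simp add: g_def)
    qed
    ultimately show "y \<in> U (\<pi>1, i1, ss1) \<inter> U (\<pi>2, i2, ss2)" using w0 by (simp add: g_def)
  qed
  show ?thesis using S3 ext1 i3b U3 sub by blast
qed

lemma refine:
  "generate_topology_on (U ` S) V \<Longrightarrow> (\<pi>, i, ss) \<in> S \<Longrightarrow> x0 \<in> V \<Longrightarrow> x0 \<in> U (\<pi>, i, ss) \<Longrightarrow>
   \<exists>\<pi>' i' ss'. (\<pi>', i', ss') \<in> S \<and> ext_le (\<pi>', i', ss') (\<pi>, i, ss) \<and> i < i' \<and>
     x0 \<in> U (\<pi>', i', ss') \<and> U (\<pi>', i', ss') \<subseteq> V \<inter> U (\<pi>, i, ss)"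
proof (induction arbitrary: \<pi> i ss rule: generate_topology_on.induct)
  case Empty
  then show ?case by simp
next
  case (Int a b)
  have xa: "x0 \<in> a" and xb: "x0 \<in> b" using Int.prems by auto
  obtain \<pi>1 i1 ss1 where r1: "(\<pi>1, i1, ss1) \<in> S" "ext_le (\<pi>1, i1, ss1) (\<pi>, i, ss)" "i < i1"
    "x0 \<in> U (\<pi>1, i1, ss1)" "U (\<pi>1, i1, ss1) \<subseteq> a \<inter> U (\<pi>, i, ss)"
    using Int.IH(1)[OF Int.prems(1) xa Int.prems(3)] by blast
  obtain \<pi>2 i2 ss2 where r2: "(\<pi>2, i2, ss2) \<in> S" "ext_le (\<pi>2, i2, ss2) (\<pi>1, i1, ss1)" "i1 < i2"
    "x0 \<in> U (\<pi>2, i2, ss2)" "U (\<pi>2, i2, ss2) \<subseteq> b \<inter> U (\<pi>1, i1, ss1)"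
    using Int.IH(2)[OF r1(1) xb r1(4)] by blast
  have "ext_le (\<pi>2, i2, ss2) (\<pi>, i, ss)" by (rule ext_le_trans[OF r2(2) r1(2)])
  moreover have "U (\<pi>2, i2, ss2) \<subseteq> a \<inter> b \<inter> U (\<pi>, i, ss)" using r1(5) r2(5) by blast
  ultimately show ?case using r2(1,3,4) r1(3) by (intro exI[of _ \<pi>2] exI[of _ i2] exI[of _ ss2]) auto
next
  case (UN K)
  obtain k where k: "k \<in> K" "x0 \<in> k" using UN.prems(2) by blast
  obtain \<pi>1 i1 ss1 where r1: "(\<pi>1, i1, ss1) \<in> S" "ext_le (\<pi>1, i1, ss1) (\<pi>, i, ss)" "i < i1"
    "x0 \<in> U (\<pi>1, i1, ss1)" "U (\<pi>1, i1, ss1) \<subseteq> k \<inter> U (\<pi>, i, ss)"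
    using UN.IH[OF k(1) UN.prems(1) k(2) UN.prems(3)] by blast
  have "U (\<pi>1, i1, ss1) \<subseteq> \<Union>K \<inter> U (\<pi>, i, ss)" using r1(5) k(1) by blast
  then show ?case using r1(1-4) by blast
next
  case (Basis s)
  obtain \<tau> where \<tau>: "\<tau> \<in> S" "s = U \<tau>" using Basis.hyps by blast
  obtain \<pi>2 i2 ss2 where t2: "\<tau> = (\<pi>2, i2, ss2)" by (cases \<tau>) auto
  have "x0 \<in> U (\<pi>2, i2, ss2)" using Basis.prems(2) \<tau> t2 by simp
  then obtain \<pi>3 i3 ss3 where r: "(\<pi>3, i3, ss3) \<in> S" "ext_le (\<pi>3, i3, ss3) (\<pi>, i, ss)" "i < i3"
     "x0 \<in> U (\<pi>3, i3, ss3)" "U (\<pi>3, i3, ss3) \<subseteq> U (\<pi>, i, ss) \<inter> U (\<pi>2, i2, ss2)"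
    using combine[OF Basis.prems(1) _ Basis.prems(3)] \<tau> t2 by blast
  have "U (\<pi>3, i3, ss3) \<subseteq> s \<inter> U (\<pi>, i, ss)" using r(5) \<tau> t2 by blast
  then show ?case using r(1-4) by blast
qed

abbreviation "T \<equiv> tau N C P"

lemma openU: "\<sigma> \<in> S \<Longrightarrow> openin T (U \<sigma>)"
  unfolding tau_def by (rule topology_generated_by_Basis) blast

lemma step:
  assumes A: "(\<pi>, i, ss) \<in> S" and D: "nowhere_dense_in T D"
  shows "\<exists>\<pi>' i' ss'. (\<pi>', i', ss') \<in> S \<and> ext_le (\<pi>', i', ss') (\<pi>, i, ss) \<and> i < i' \<and>
     U (\<pi>', i', ss') \<inter> (T closure_of D) = {}"
proof -
  have o1: "openin T (U (\<pi>, i, ss))" using openU[OF A] .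
  have o2: "openin T (U (\<pi>, i, ss) - T closure_of D)" by (rule openin_diff[OF o1 closedin_closure_of])
  have "U (\<pi>, i, ss) - T closure_of D \<noteq> {}"
  proof
    assume "U (\<pi>, i, ss) - T closure_of D = {}"
    then have "U (\<pi>, i, ss) \<subseteq> T closure_of D" by blast
    then have "U (\<pi>, i, ss) \<subseteq> T interior_of (T closure_of D)" using interior_of_maximal[OF _ o1] by blast
    then have "U (\<pi>, i, ss) = {}" using D unfolding nowhere_dense_in_def by blast
    then show False using nonempty[OF A] by simp
  qed
  then obtain x0 where x0: "x0 \<in> U (\<pi>, i, ss) - T closure_of D" by blast
  have g: "generate_topology_on (U ` S) (U (\<pi>, i, ss) - T closure_of D)"
    using o2 unfolding tau_def by (simp add: openin_topology_generated_by_iff)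
  obtain \<pi>' i' ss' where r: "(\<pi>', i', ss') \<in> S" "ext_le (\<pi>', i', ss') (\<pi>, i, ss)" "i < i'"
     "U (\<pi>', i', ss') \<subseteq> (U (\<pi>, i, ss) - T closure_of D) \<inter> U (\<pi>, i, ss)"
    using refine[OF g A] x0 by blast
  then show ?thesis by blast
qed

lemma nonmeager:
  assumes A: "(\<pi>, i, ss) \<in> S" and F: "countable F" and nd: "\<forall>B\<in>F. nowhere_dense_in T B"
    and sub: "U (\<pi>, i, ss) \<subseteq> \<Union>F"
  shows False
proof -
  have Fne: "F \<noteq> {}" using sub nonempty[OF A] by auto
  define D where "D = from_nat_into F"
  have DF: "D m \<in> F" for m unfolding D_def by (rule from_nat_into[OF Fne])
  have rD: "range D = F" unfolding D_def by (rule range_from_nat_into[OF Fne F])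
  define Q where "Q m \<sigma> \<sigma>' \<longleftrightarrow> \<sigma>' \<in> S \<and> ext_le \<sigma>' \<sigma> \<and> fst (snd \<sigma>) < fst (snd \<sigma>') \<and> U \<sigma>' \<inter> (T closure_of D m) = {}" for m \<sigma> \<sigma>'
  have exQ: "\<exists>\<sigma>'. Q m \<sigma> \<sigma>'" if sS: "\<sigma> \<in> S" for m \<sigma>
  proof -
    obtain \<pi>0 i0 ss0 where s: "\<sigma> = (\<pi>0, i0, ss0)" by (cases \<sigma>) auto
    have ndm: "nowhere_dense_in T (D m)" using nd DF by blast
    have sS': "(\<pi>0, i0, ss0) \<in> S" using sS s by simp
    obtain \<pi>' i' ss' where "(\<pi>', i', ss') \<in> S \<and> ext_le (\<pi>', i', ss') (\<pi>0, i0, ss0) \<and> i0 < i' \<and>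
     U (\<pi>', i', ss') \<inter> (T closure_of D m) = {}" using step[OF sS' ndm] by blast
    then show ?thesis unfolding Q_def s by auto
  qed
  define nxt where "nxt m \<sigma> = (SOME \<sigma>'. Q m \<sigma> \<sigma>')" for m \<sigma>
  define sq where "sq = rec_nat (\<pi>, i, ss) nxt"
  have sq0: "sq 0 = (\<pi>, i, ss)" and sqS: "sq (Suc m) = nxt m (sq m)" for m by (simp_all add: sq_def)
  have inS: "sq m \<in> S \<and> Q m (sq m) (sq (Suc m))" for m
  proof (induction m)
    case 0
    show ?case using A exQ[of "sq 0" 0] someI_ex[of "Q 0 (sq 0)"] by (simp add: sq0 sqS nxt_def)
  next
    case (Suc m)
    then have a: "sq (Suc m) \<in> S" by (simp add: Q_def)
    show ?case using a exQ[OF a, of "Suc m"] someI_ex[of "Q (Suc m) (sq (Suc m))"] by (simp add: sqS[of "Suc m"] nxt_def)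
  qed
  have "\<exists>x0. \<forall>m. x0 \<in> U (fst (sq m), fst (snd (sq m)), snd (snd (sq m)))"
  proof (rule fusion)
    show "(fst (sq m), fst (snd (sq m)), snd (snd (sq m))) \<in> S" for m using inS[of m] by simp
    show "ext_le (fst (sq (Suc m)), fst (snd (sq (Suc m))), snd (snd (sq (Suc m)))) (fst (sq m), fst (snd (sq m)), snd (snd (sq m)))" for m
      using inS[of m] by (simp add: Q_def)
    show "fst (snd (sq m)) < fst (snd (sq (Suc m)))" for m using inS[of m] by (simp add: Q_def)
  qed
  then obtain x0 where x0: "\<And>m. x0 \<in> U (sq m)" by auto
  have "x0 \<in> \<Union>F" using x0[of 0] sub sq0 by auto
  then obtain m where m: "x0 \<in> D m" using rD by blast
  have "D m \<subseteq> topspace T" using nd DF unfolding nowhere_dense_in_def by blast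
  then have "x0 \<in> T closure_of D m" using closure_of_subset m by blast
  moreover have "U (sq (Suc m)) \<inter> (T closure_of D m) = {}" using inS[of m] by (simp add: Q_def)
  ultimately show False using x0[of "Suc m"] by blast
qed

end

theorem proposition2p6:
  fixes N :: "nat \<Rightarrow> nat"
    and C :: "nat \<Rightarrow> (nat \<Rightarrow> bool) set"
    and P :: "nat \<Rightarrow> (nat \<Rightarrow> bool) set"
  assumes N0: "N 0 = 0"
    and Nmono: "strict_mono N"
    and Csub: "\<And>i. C i \<subseteq> seqs {N i..<N (Suc i)}"
    and Cint: "\<And>i s. (\<forall>k \<le> N i. s k \<in> seqs {N i..<N (Suc i)}) \<Longrightarrow>
                 (\<Inter>k \<in> {..N i}. setadd (C i) (s k)) \<noteq> {} \<and>
                 (\<Inter>k \<in> {..N i}. setadd (seqs {N i..<N (Suc i)} - C i) (s k)) \<noteq> {}"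
    and Pne: "\<And>m. P m \<noteq> {}"
    and Pperf: "\<And>m. perfect_set (P m)"
  shows "(\<forall>\<rho> \<in> Sset N C P. Uset N C P \<rho> \<noteq> {} \<and> \<not> meager_in (tau N C P) (Uset N C P \<rho>))
         \<and> Baire_space_top (tau N C P)"
proof -
  have "ctx N C"
  proof
    show "N 0 = 0" by (rule N0)
    show "strict_mono N" by (rule Nmono)
    show "\<And>i. C i \<subseteq> seqs {N i..<N (Suc i)}" by (rule Csub)
    show "(\<Inter>k \<in> {..N i}. setadd (C i) (s k)) \<noteq> {}" if "\<forall>k\<le>N i. s k \<in> seqs {N i..<N (Suc i)}" for i s
      using Cint[OF that] by (rule conjunct1)
  qed
  then interpret ctx N C P .
  have part1: "Uset N C P \<rho> \<noteq> {} \<and> \<not> meager_in (tau N C P) (Uset N C P \<rho>)" if r: "\<rho> \<in> Sset N C P" for \<rho>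
  proof -
    obtain \<pi> i ss where s: "\<rho> = (\<pi>, i, ss)" by (cases \<rho>) auto
    have A: "(\<pi>, i, ss) \<in> S" using r s by simp
    have "\<not> meager_in T (U (\<pi>, i, ss))"
    proof
      assume "meager_in T (U (\<pi>, i, ss))"
      then obtain F where F0: "countable F \<and> (\<forall>B\<in>F. nowhere_dense_in T B) \<and> U (\<pi>, i, ss) = \<Union>F"
        unfolding meager_in_def by (rule exE)
      note F = F0[THEN conjunct1] F0[THEN conjunct2, THEN conjunct1] F0[THEN conjunct2, THEN conjunct2]
      have "U (\<pi>, i, ss) \<subseteq> \<Union>F" using F(3) by (rule equalityD1)
      then show False by (rule nonmeager[OF A F(1) F(2)])
    qed
    moreover have "U (\<pi>, i, ss) \<noteq> {}" by (rule nonempty[OF A])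
    ultimately show ?thesis unfolding s by (rule conjI[rotated])
  qed
  have part2: "Baire_space_top (tau N C P)"
    unfolding Baire_space_top_def
  proof (intro allI impI notI)
    fix V assume V: "openin T V \<and> V \<noteq> {}" and mg: "meager_in T V"
    from mg obtain F where F0: "countable F \<and> (\<forall>B\<in>F. nowhere_dense_in T B) \<and> V = \<Union>F"
      unfolding meager_in_def by (rule exE)
    note F = F0[THEN conjunct1] F0[THEN conjunct2, THEN conjunct1] F0[THEN conjunct2, THEN conjunct2]
    obtain x0 where x0: "x0 \<in> V" using V by blast
    have "V \<subseteq> topspace T" using V openin_subset by blast
    moreover have "topspace T = \<Union>(U ` S)" unfolding tau_def by simp
    ultimately have "x0 \<in> \<Union>(U ` S)" using x0 by blast
    then obtain \<tau> where t: "\<tau> \<in> S" "x0 \<in> U \<tau>" by blast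
    obtain \<pi> i ss where s: "\<tau> = (\<pi>, i, ss)" by (cases \<tau>) auto
    have g: "generate_topology_on (U ` S) V" using V unfolding tau_def by (simp add: openin_topology_generated_by_iff)
    obtain \<pi>' i' ss' where r: "(\<pi>', i', ss') \<in> S" "U (\<pi>', i', ss') \<subseteq> V \<inter> U (\<pi>, i, ss)"
      using refine[OF g _ x0, of \<pi> i ss] t s by blast
    have "U (\<pi>', i', ss') \<subseteq> \<Union>F" using r(2) F(3) by blast
    then show False by (rule nonmeager[OF r(1) F(1) F(2)])
  qed
  show ?thesis using part1 part2 by blast
qed

end
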